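(* Let $T\in\mathcal{B}(\mathcal{H})$ be power bounded and let $L$ be a Banach limit such that $A_{T,L}\neq 0$. Then $\|A_{T,L}\|\geq 1$. In particular, if $T$ is a contraction with $A_T\neq 0$, then $\|A_T\|=1$.
   Context: $\mathcal{H}$ is a complex Hilbert space and $\mathcal{B}(\mathcal{H})$ the algebra of bounded linear operators on it. An operator $T$ is power bounded if $\sup_{n\in\mathbb{N}}\|T^n\|<\infty$. A Banach limit is a linear functional $L$ on $\ell^\infty(\mathbb{N})$, written $\{x_n\}\mapsto \operatorname{L-lim}_{n\to\infty}x_n$, such that $\|L\|=1$, $\operatorname{L-lim}x_n=\lim x_n$ for convergent sequences, $\operatorname{L-lim}x_n\ge 0$ whenever all $x_n\ge0$, and $\operatorname{L-lim}x_n=\operatorname{L-lim}x_{n+1}$. For a power bounded $T$ and a Banach limit $L$, the $L$-asymptotic limit $A_{T,L}$ is the unique positive operator with $\langle A_{T,L}x,y\rangle=\operatorname{L-lim}_{n\to\infty}\langle T^{*n}T^nx,y\rangle$ for all $x,y\in\mathcal{H}$. For a contraction $T$ ($\|T\|\le1$), the sequence $T^{*n}T^n$ converges in the strong operator topology to a positive operator $A_T$, the asymptotic limit of $T$ (it equals $A_{T,L}$ for every Banach limit $L$). *)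

theory Defs
  imports "HOL-Analysis.Analysis"
begin

text \<open>HOL-Analysis only provides real inner product spaces.\<close>

class complex_inner = real_inner +
  fixes scaleC :: "complex \<Rightarrow> 'a \<Rightarrow> 'a"
    and cinner :: "'a \<Rightarrow> 'a \<Rightarrow> complex"
  assumes scaleC_of_real: "scaleC (complex_of_real r) x = scaleR r x"
    and scaleC_add_right: "scaleC a (x + y) = scaleC a x + scaleC a y"
    and scaleC_add_left: "scaleC (a + b) x = scaleC a x + scaleC b x"
    and scaleC_scaleC: "scaleC a (scaleC b x) = scaleC (a * b) x"
    and scaleC_one: "scaleC 1 x = x"
    and cinner_commute: "cinner x y = cnj (cinner y x)"
    and cinner_add_left: "cinner (x + y) z = cinner x z + cinner y z"
    and cinner_scaleC_left: "cinner (scaleC a x) y = a * cinner x y"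
    and inner_cinner: "inner x y = Re (cinner x y)"

class chilbert = complex_inner + complete_space

text \<open>Elements of B(H): bounded complex-linear maps H \<Rightarrow> H. The operator norm is onorm.\<close>
definition bounded_clinear :: "('a::complex_inner \<Rightarrow> 'a) \<Rightarrow> bool" where
  "bounded_clinear T \<longleftrightarrow> bounded_linear T \<and> (\<forall>c x. T (scaleC c x) = scaleC c (T x))"

definition cadjoint :: "('a::complex_inner \<Rightarrow> 'a) \<Rightarrow> ('a \<Rightarrow> 'a)" where
  "cadjoint T = (THE S. \<forall>x y. cinner (T x) y = cinner x (S y))"

definition positive_op :: "('a::complex_inner \<Rightarrow> 'a) \<Rightarrow> bool" where
  "positive_op A \<longleftrightarrow> (\<forall>x. Im (cinner (A x) x) = 0 \<and> Re (cinner (A x) x) \<ge> 0)"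

definition power_bounded :: "('a::complex_inner \<Rightarrow> 'a) \<Rightarrow> bool" where
  "power_bounded T \<longleftrightarrow> bounded_clinear T \<and> (\<exists>M. \<forall>n. onorm (T ^^ n) \<le> M)"

definition contraction :: "('a::complex_inner \<Rightarrow> 'a) \<Rightarrow> bool" where
  "contraction T \<longleftrightarrow> bounded_clinear T \<and> onorm T \<le> 1"

text \<open>A Banach limit is a functional on l-infinity(N) (complex bounded sequences). It is
modelled as a function on all sequences nat \<Rightarrow> complex; all conditions only concern
bounded sequences, the values on unbounded sequences are irrelevant.
The condition norm L = 1 is stated as norm (L x) \<le> sup_n norm (x n); the reverse
inequality is implied by L preserving limits of convergent (e.g. constant) sequences.\<close>
definition banach_limit :: "((nat \<Rightarrow> complex) \<Rightarrow> complex) \<Rightarrow> bool" where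
  "banach_limit L \<longleftrightarrow>
     (\<forall>x y. bounded (range x) \<longrightarrow> bounded (range y) \<longrightarrow> L (\<lambda>n. x n + y n) = L x + L y) \<and>
     (\<forall>c x. bounded (range x) \<longrightarrow> L (\<lambda>n. c * x n) = c * L x) \<and>
     (\<forall>x. bounded (range x) \<longrightarrow> cmod (L x) \<le> (SUP n. cmod (x n))) \<and>
     (\<forall>x. convergent x \<longrightarrow> L x = lim x) \<and>
     (\<forall>x. bounded (range x) \<longrightarrow> (\<forall>n. Im (x n) = 0 \<and> Re (x n) \<ge> 0) \<longrightarrow>
            Im (L x) = 0 \<and> Re (L x) \<ge> 0) \<and>
     (\<forall>x. bounded (range x) \<longrightarrow> L x = L (\<lambda>n. x (Suc n)))"

definition asym_limit_L :: "('a::complex_inner \<Rightarrow> 'a) \<Rightarrow> ((nat \<Rightarrow> complex) \<Rightarrow> complex) \<Rightarrow> ('a \<Rightarrow> 'a)" where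
  "asym_limit_L T L = (THE A. bounded_clinear A \<and> positive_op A \<and>
      (\<forall>x y. cinner (A x) y = L (\<lambda>n. cinner ((cadjoint T ^^ n) ((T ^^ n) x)) y)))"

definition asym_limit :: "('a::complex_inner \<Rightarrow> 'a) \<Rightarrow> ('a \<Rightarrow> 'a)" where
  "asym_limit T = (THE A. \<forall>x. (\<lambda>n. (cadjoint T ^^ n) ((T ^^ n) x)) \<longlonglongrightarrow> A x)"

end

theory Submission
  imports Defs
begin


lemma cinner_add_right: "cinner x (y + z) = cinner x y + (cinner x z::complex)"
  for x :: "'a::complex_inner"
  by (metis cinner_add_left cinner_commute complex_cnj_add)

lemma cinner_scaleC_right: "cinner x (scaleC a y) = cnj a * cinner (x::'a::complex_inner) y"
  by (metis cinner_commute cinner_scaleC_left complex_cnj_cnj complex_cnj_mult)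

lemma cinner_zero_left[simp]: "cinner 0 (y::'a::complex_inner) = 0"
  using cinner_add_left[of "0::'a" 0 y] by simp

lemma cinner_zero_right[simp]: "cinner (y::'a::complex_inner) 0 = 0"
  by (metis cinner_commute cinner_zero_left complex_cnj_zero)

lemma cinner_minus_left: "cinner (- x) (y::'a::complex_inner) = - cinner x y"
  using cinner_add_left[of x "-x" y] by (simp add: eq_neg_iff_add_eq_0 add.commute)

lemma cinner_minus_right: "cinner y (- x) = - cinner (y::'a::complex_inner) x"
  by (metis cinner_commute cinner_minus_left complex_cnj_minus)

lemma cinner_diff_left: "cinner (x - z) (y::'a::complex_inner) = cinner x y - cinner z y"
  by (metis cinner_add_left cinner_minus_left diff_conv_add_uminus)

lemma cinner_diff_right: "cinner y (x - z) = cinner (y::'a::complex_inner) x - cinner y z"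
  by (metis cinner_add_right cinner_minus_right diff_conv_add_uminus)

lemma Re_cinner: "Re (cinner x y) = inner x (y::'a::complex_inner)"
  by (simp add: inner_cinner)

lemma cinner_self: "cinner x x = complex_of_real ((norm (x::'a::complex_inner))^2)"
proof -
  have "Im (cinner x x) = 0"
    using cinner_commute[of x x] by (metis Im_complex_of_real Reals_cnj_iff complex_is_Real_iff)
  moreover have "Re (cinner x x) = (norm x)^2"
    by (simp add: inner_cinner[symmetric] power2_norm_eq_inner)
  ultimately show ?thesis by (simp add: complex_eq_iff)
qed

lemma Im_cinner: "Im (cinner x y) = inner (scaleC (- \<i>) x) (y::'a::complex_inner)"
  by (simp add: inner_cinner cinner_scaleC_left)

lemma cinner_eqI:
  fixes x y u v :: "'a::complex_inner"
  assumes "\<And>c. inner (scaleC c x) y = inner (scaleC c u) v"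
  shows "cinner x y = cinner u v"
proof -
  have "Re (cinner x y) = Re (cinner u v)" using assms[of 1] by (simp add: scaleC_one inner_cinner)
  moreover have "Im (cinner x y) = Im (cinner u v)" using assms[of "-\<i>"] by (simp only: Im_cinner)
  ultimately show ?thesis by (simp add: complex_eq_iff)
qed

lemma norm_scaleC: "norm (scaleC c (x::'a::complex_inner)) = cmod c * norm x"
proof -
  have "(norm (scaleC c x))^2 = (cmod c * norm x)^2"
  proof -
    have "complex_of_real ((norm (scaleC c x))^2) = cinner (scaleC c x) (scaleC c x)"
      by (simp add: cinner_self)
    also have "\<dots> = c * cnj c * cinner x x"
      by (simp add: cinner_scaleC_left cinner_scaleC_right)
    also have "\<dots> = complex_of_real ((cmod c * norm x)^2)"
      by (simp add: cinner_self complex_norm_square[symmetric] power_mult_distrib)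
    finally show ?thesis by (simp only: of_real_eq_iff)
  qed
  then show ?thesis by (simp add: power2_eq_iff_nonneg)
qed

lemma scaleC_zero[simp]: "scaleC c (0::'a::complex_inner) = 0"
  using scaleC_add_right[of c "0::'a" 0] by simp

lemma scaleC_scaleR: "scaleC c (scaleR r x) = scaleR r (scaleC c (x::'a::complex_inner))"
  by (metis mult.commute scaleC_of_real scaleC_scaleC)

lemma cinner_CS: "cmod (cinner x y) \<le> norm x * norm (y::'a::complex_inner)"
proof (cases "cinner x y = 0")
  case True then show ?thesis by simp
next
  case False
  define c where "c = cnj (cinner x y) / cmod (cinner x y)"
  have cm: "cmod c = 1" using False by (simp add: c_def norm_divide)
  have "cinner (scaleC c x) y = complex_of_real (cmod (cinner x y))"
    using False by (simp add: c_def cinner_scaleC_left complex_norm_square[symmetric] power2_eq_square field_simps)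
  then have "cmod (cinner x y) = inner (scaleC c x) y"
    by (metis Re_complex_of_real inner_cinner)
  also have "\<dots> \<le> norm (scaleC c x) * norm y" by (rule norm_cauchy_schwarz)
  also have "\<dots> = norm x * norm y" by (simp add: norm_scaleC cm)
  finally show ?thesis .
qed

lemma cinner_ext: "(\<And>y. cinner x y = cinner x' (y::'a::complex_inner)) \<Longrightarrow> x = x'"
proof -
  assume h: "\<And>y. cinner x y = cinner x' y"
  have "cinner (x - x') (x - x') = 0" using h by (simp add: cinner_diff_left)
  then show ?thesis by (simp add: cinner_self)
qed



lemma riesz_real:
  fixes f :: "'a::{real_inner,complete_space} \<Rightarrow> real"
  assumes f: "bounded_linear f"
  shows "\<exists>z. \<forall>x. f x = inner z x"
proof -
  interpret f: bounded_linear f by fact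
  obtain K where K: "\<And>x. norm (f x) \<le> norm x * K" "K > 0" using f.pos_bounded by blast
  define J where "J x = (norm x)^2/2 - f x" for x
  have Jlb: "-(K^2)/2 \<le> J x" for x
  proof -
    have "f x \<le> norm x * K" using K(1)[of x] by simp
    moreover have "0 \<le> (norm x - K)^2" by simp
    ultimately show ?thesis unfolding J_def by (simp add: power2_eq_square algebra_simps)
  qed
  define m where "m = Inf (range J)"
  have bdd: "bdd_below (range J)" using Jlb by (meson bdd_belowI2)
  have mle: "m \<le> J x" for x unfolding m_def using bdd by (simp add: cInf_lower)
  have "\<exists>x. J x < m + inverse (real (Suc n))" for n
  proof -
    have "Inf (range J) < m + inverse (real (Suc n))" unfolding m_def by simp
    then show ?thesis using bdd by (simp add: cInf_less_iff)
  qed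
  then obtain X where X: "\<And>n. J (X n) < m + inverse (real (Suc n))" by metis
  have aux: "\<And>a b m u v::real. a < m+u \<Longrightarrow> b < m+v \<Longrightarrow> (a+b)/2 - m < (u+v)/2" by (simp add: field_simps)
  have aux2: "\<And>u v w::real. u \<le> w \<Longrightarrow> v \<le> w \<Longrightarrow> (u+v)/2 \<le> w" by (simp add: field_simps)
  have par: "(norm (a - b))^2 / 8 = (J a + J b)/2 - J (scaleR (1/2) (a+b))" for a b
    unfolding J_def by (simp add: power2_norm_eq_inner inner_simps f.add f.scaleR f.diff inner_commute algebra_simps) (simp add: field_simps)
  have dX: "(norm (X i - X j))^2 < 8 * inverse (real (Suc N))" if "i \<ge> N" "j \<ge> N" for i j N
  proof -
    have "(norm (X i - X j))^2 / 8 \<le> (J (X i) + J (X j))/2 - m"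
      using par[of "X i" "X j"] mle[of "scaleR (1/2) (X i + X j)"] by linarith
    also have "\<dots> < (inverse (real (Suc i)) + inverse (real (Suc j)))/2"
      by (rule aux[OF X[of i] X[of j]])
    also have "\<dots> \<le> inverse (real (Suc N))"
    proof -
      have "inverse (real (Suc i)) \<le> inverse (real (Suc N))" "inverse (real (Suc j)) \<le> inverse (real (Suc N))"
        using that by (auto intro!: le_imp_inverse_le)
      then show ?thesis by (rule aux2)
    qed
    finally show ?thesis by linarith
  qed
  have "Cauchy X"
  proof (rule metric_CauchyI)
    fix e :: real assume e: "e > 0"
    obtain N where N: "8 / e^2 < real N" using reals_Archimedean2 by blast
    have "8 * inverse (real (Suc N)) < e^2"
    proof -
      have e2: "0 < e^2" using e by simp
      have "8 < real N * e^2" using N e2 by (simp add: field_simps)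
      moreover have "real N * e^2 < real (Suc N) * e^2" using e2 by simp
      ultimately have "8 < real (Suc N) * e^2" by linarith
      then show ?thesis by (simp add: field_simps)
    qed
    show "\<exists>M. \<forall>m\<ge>M. \<forall>n\<ge>M. dist (X m) (X n) < e"
    proof (intro exI allI impI)
      fix i j assume "i \<ge> N" "j \<ge> N"
      then have "(dist (X i) (X j))^2 < e^2"
        using dX[of N i j] \<open>8 * inverse (real (Suc N)) < e^2\<close> by (simp add: dist_norm)
      then show "dist (X i) (X j) < e" using e by (meson power_less_imp_less_base less_imp_le)
    qed
  qed
  then obtain y where y: "X \<longlonglongrightarrow> y" using Cauchy_convergent_iff convergent_def by blast
  have "(\<lambda>n. J (X n)) \<longlonglongrightarrow> J y"
    unfolding J_def by (auto intro!: tendsto_intros f.tendsto y)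
  moreover have "(\<lambda>n. J (X n)) \<longlonglongrightarrow> m"
  proof (rule tendsto_sandwich[of "\<lambda>n. m" _ _ "\<lambda>n. m + inverse (real (Suc n))"])
    show "\<forall>\<^sub>F n in sequentially. m \<le> J (X n)" using mle by simp
    show "\<forall>\<^sub>F n in sequentially. J (X n) \<le> m + inverse (real (Suc n))" using X by (simp add: less_imp_le)
    show "(\<lambda>n. m) \<longlonglongrightarrow> m" by simp
    show "(\<lambda>n. m + inverse (real (Suc n))) \<longlonglongrightarrow> m"
      using tendsto_add[OF tendsto_const LIMSEQ_inverse_real_of_nat, of m] by simp
  qed
  ultimately have Jy: "J y = m" using LIMSEQ_unique by blast
  have "f h = inner y h" for h
  proof (rule ccontr)
    assume ne: "f h \<noteq> inner y h"
    define d where "d = inner y h - f h"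
    define N where "N = (norm h)^2"
    have dne: "d \<noteq> 0" using ne d_def by simp
    have N0: "N \<ge> 0" unfolding N_def by simp
    define t where "t = - d / (N + 1)"
    have "J y \<le> J (y + t *\<^sub>R h)" using mle Jy by simp
    moreover have e: "(norm (y + t *\<^sub>R h))^2 = (norm y)^2 + 2*t*inner y h + t^2 * (norm h)^2"
      unfolding power2_norm_eq_inner by (simp add: inner_simps inner_commute algebra_simps power2_eq_square)
    ultimately have "0 \<le> t * d + t^2 * N / 2"
      unfolding J_def d_def N_def using e by (simp add: f.add f.scaleR field_simps)
    also have "t * d + t^2 * N / 2 = d^2 * (N / (2 * (N+1)^2) - 1 / (N+1))"
      unfolding t_def using N0 by (simp add: field_simps power2_eq_square)
    also have "\<dots> < 0"
    proof -
      have "N / (2 * (N+1)^2) < 1 / (N+1)"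
      proof -
        have p: "0 < N+1" using N0 by simp
        have eq: "N / (2*(N+1)^2) = (N/(2*(N+1))) * (1/(N+1))" by (simp add: power2_eq_square)
        have "N/(2*(N+1)) < 1" using N0 by simp
        then have "(N/(2*(N+1))) * (1/(N+1)) < 1 * (1/(N+1))" using p by (intro mult_strict_right_mono) auto
        then show ?thesis unfolding eq by simp
      qed
      moreover have "d^2 > 0" using dne by simp
      ultimately show ?thesis by (simp add: mult_pos_neg)
    qed
    finally show False by simp
  qed
  then show ?thesis by blast
qed






lemma bcl_pow: "bounded_clinear T \<Longrightarrow> bounded_clinear (T ^^ n)"
proof (induction n)
  case 0 then show ?case by (simp add: bounded_clinear_def bounded_linear_ident)
next
  case (Suc n)
  then show ?case
    unfolding bounded_clinear_def
    by (auto simp: comp_def intro: bounded_linear_compose)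
qed

lemma bcl_linear: "bounded_clinear T \<Longrightarrow> bounded_linear T"
  by (simp add: bounded_clinear_def)

lemma bcl_scaleC: "bounded_clinear T \<Longrightarrow> T (scaleC c x) = scaleC c (T x)"
  by (simp add: bounded_clinear_def)

lemma adjoint_exists:
  fixes T :: "'a::chilbert \<Rightarrow> 'a"
  assumes T: "bounded_clinear T"
  shows "\<exists>S. \<forall>x y. cinner (T x) y = cinner x (S y)"
proof -
  have "\<exists>z. \<forall>x. inner (T x) y = inner z x" for y
  proof (rule riesz_real)
    show "bounded_linear (\<lambda>x. inner (T x) y)"
      using bounded_linear_compose[OF bounded_linear_inner_left bcl_linear[OF T]] by (simp add: o_def)
  qed
  then obtain S where S: "\<And>x y. inner (T x) y = inner (S y) x" by metis
  have "cinner (T x) y = cinner x (S y)" for x y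
  proof (rule cinner_eqI)
    fix c
    show "inner (scaleC c (T x)) y = inner (scaleC c x) (S y)"
      using S[of "scaleC c x" y] bcl_scaleC[OF T] by (simp add: inner_commute)
  qed
  then show ?thesis by blast
qed

lemma cadjoint:
  fixes T :: "'a::chilbert \<Rightarrow> 'a"
  assumes T: "bounded_clinear T"
  shows "cinner (T x) y = cinner x (cadjoint T y)"
proof -
  obtain S where S: "\<forall>x y. cinner (T x) y = cinner x (S y)" using adjoint_exists[OF T] by blast
  have "\<exists>!S. \<forall>x y. cinner (T x) y = cinner x (S y)"
  proof (rule ex1I[of _ S])
    show "\<forall>x y. cinner (T x) y = cinner x (S y)" by (rule S)
    fix S' assume S': "\<forall>x y. cinner (T x) y = cinner x (S' y)"
    show "S' = S"
    proof
      fix y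
      show "S' y = S y"
        by (rule cinner_ext) (metis S S' cinner_commute)
    qed
  qed
  then have "\<forall>x y. cinner (T x) y = cinner x (cadjoint T y)"
    unfolding cadjoint_def by (rule theI')
  then show ?thesis by blast
qed

lemma cadjoint_pow:
  fixes T :: "'a::chilbert \<Rightarrow> 'a"
  assumes T: "bounded_clinear T"
  shows "cinner ((cadjoint T ^^ n) w) y = cinner w ((T ^^ n) y)"
proof (induction n arbitrary: y)
  case 0 then show ?case by simp
next
  case (Suc n)
  have "cinner ((cadjoint T ^^ Suc n) w) y = cinner (cadjoint T ((cadjoint T ^^ n) w)) y" by simp
  also have "\<dots> = cinner ((cadjoint T ^^ n) w) (T y)"
    by (metis T cadjoint cinner_commute)
  also have "\<dots> = cinner w ((T ^^ n) (T y))" by (rule Suc)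
  also have "(T ^^ n) (T y) = (T ^^ Suc n) y" by (simp add: funpow_Suc_right del: funpow.simps)
  finally show ?case .
qed

lemma cadjoint_pow2:
  fixes T :: "'a::chilbert \<Rightarrow> 'a"
  assumes T: "bounded_clinear T"
  shows "cinner ((cadjoint T ^^ n) ((T ^^ n) x)) y = cinner ((T ^^ n) x) ((T ^^ n) y)"
  by (rule cadjoint_pow[OF T])

lemma polarization_zero:
  fixes A :: "'a::complex_inner \<Rightarrow> 'a"
  assumes A: "bounded_clinear A" and z: "\<And>x. cinner (A x) x = 0"
  shows "A x = 0"
proof -
  have add: "A (u + v) = A u + A v" for u v using bcl_linear[OF A] by (simp add: linear_simps)
  have s1: "cinner (A u) v + cinner (A v) u = 0" for u v
    using z[of "u+v"] z[of u] z[of v] by (simp add: add cinner_add_left cinner_add_right add.commute)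
  have s2: "cinner (A u) v = cinner (A v) u" for u v
  proof -
    have "cinner (A u) (scaleC \<i> v) + cinner (A (scaleC \<i> v)) u = 0" by (rule s1)
    then have "- \<i> * cinner (A u) v + \<i> * cinner (A v) u = 0"
      by (simp add: cinner_scaleC_right cinner_scaleC_left bcl_scaleC[OF A])
    then show ?thesis by (simp add: algebra_simps)
  qed
  have "cinner (A x) (A x) = 0" using s1[of x "A x"] s2[of x "A x"] by simp
  then show ?thesis by (simp add: cinner_self)
qed



lemma bounded_seqI: "(\<And>n. cmod (x n) \<le> C) \<Longrightarrow> bounded (range x)"
  unfolding bounded_iff by blast

lemma BL_add: "banach_limit L \<Longrightarrow> bounded (range x) \<Longrightarrow> bounded (range y) \<Longrightarrow> L (\<lambda>n. x n + y n) = L x + L y"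
  unfolding banach_limit_def by blast
lemma BL_mult: "banach_limit L \<Longrightarrow> bounded (range x) \<Longrightarrow> L (\<lambda>n. c * x n) = c * L x"
  unfolding banach_limit_def by blast
lemma BL_conv: "banach_limit L \<Longrightarrow> convergent x \<Longrightarrow> L x = lim x"
  unfolding banach_limit_def by blast
lemma BL_pos: "banach_limit L \<Longrightarrow> bounded (range x) \<Longrightarrow> (\<And>n. Im (x n) = 0 \<and> Re (x n) \<ge> 0) \<Longrightarrow> Im (L x) = 0 \<and> Re (L x) \<ge> 0"
  unfolding banach_limit_def by blast
lemma BL_shift: "banach_limit L \<Longrightarrow> bounded (range x) \<Longrightarrow> L x = L (\<lambda>n. x (Suc n))"
  unfolding banach_limit_def by blast
lemma BL_bound:
  assumes "banach_limit L" "\<And>n. cmod (x n) \<le> C"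
  shows "cmod (L x) \<le> C"
proof -
  have "cmod (L x) \<le> (SUP n. cmod (x n))" using assms bounded_seqI unfolding banach_limit_def by blast
  also have "\<dots> \<le> C" using assms(2) by (rule cSUP_least[OF UNIV_not_empty])
  finally show ?thesis .
qed
lemma BL_const: "banach_limit L \<Longrightarrow> L (\<lambda>n. c) = c"
  using BL_conv[of L "\<lambda>n. c"] by (simp add: convergent_const)

lemma pb_bound:
  assumes "power_bounded T"
  obtains M where "M \<ge> 0" "\<And>n x. norm ((T ^^ n) x) \<le> M * norm x"
proof -
  obtain M where M: "\<And>n. onorm (T ^^ n) \<le> M" and T: "bounded_clinear T"
    using assms unfolding power_bounded_def by blast
  have "norm ((T ^^ n) x) \<le> M * norm x" for n x
  proof -
    have "norm ((T ^^ n) x) \<le> onorm (T ^^ n) * norm x"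
      by (rule onorm[OF bcl_linear[OF bcl_pow[OF T]]])
    also have "\<dots> \<le> M * norm x" by (rule mult_right_mono[OF M]) simp
    finally show ?thesis .
  qed
  moreover have "M \<ge> 0" using M[of 0] onorm_pos_le[OF bcl_linear[OF bcl_pow[OF T]], of 0] by linarith
  ultimately show ?thesis using that by blast
qed

lemma asym_L_props:
  fixes T :: "'a::chilbert \<Rightarrow> 'a"
  assumes pb: "power_bounded T" and L: "banach_limit L"
  shows "bounded_clinear (asym_limit_L T L) \<and> positive_op (asym_limit_L T L) \<and>
     (\<forall>x y. cinner (asym_limit_L T L x) y = L (\<lambda>n. cinner ((T^^n) x) ((T^^n) y)))"
proof -
  have T: "bounded_clinear T" using pb unfolding power_bounded_def by blast
  obtain M where M0: "M \<ge> 0" and M: "\<And>n x. norm ((T ^^ n) x) \<le> M * norm x" using pb_bound[OF pb] by blast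
  have lin: "bounded_linear (T^^n)" for n by (rule bcl_linear[OF bcl_pow[OF T]])
  have Tadd: "(T^^n) (u + v) = (T^^n) u + (T^^n) v" for n u v using lin[of n] by (simp add: linear_simps)
  have Tsc: "(T^^n) (scaleC c u) = scaleC c ((T^^n) u)" for n c u by (rule bcl_scaleC[OF bcl_pow[OF T]])
  define B where "B x y = L (\<lambda>n. cinner ((T^^n) x) ((T^^n) y))" for x y
  have sb: "cmod (cinner ((T^^n) x) ((T^^n) y)) \<le> M * norm x * (M * norm y)" for n x y
  proof -
    have "cmod (cinner ((T^^n) x) ((T^^n) y)) \<le> norm ((T^^n) x) * norm ((T^^n) y)" by (rule cinner_CS)
    also have "\<dots> \<le> M * norm x * (M * norm y)" by (rule mult_mono[OF M M]) (auto simp: M0)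
    finally show ?thesis .
  qed
  have bdd: "bounded (range (\<lambda>n. cinner ((T^^n) x) ((T^^n) y)))" for x y by (rule bounded_seqI[OF sb])
  have Badd2: "B x (y1 + y2) = B x y1 + B x y2" for x y1 y2
    unfolding B_def by (simp add: Tadd cinner_add_right BL_add[OF L bdd bdd])
  have Bsc2: "B x (scaleC c y) = cnj c * B x y" for x c y
    unfolding B_def by (simp add: Tsc cinner_scaleC_right BL_mult[OF L bdd])
  have Badd1: "B (x1 + x2) y = B x1 y + B x2 y" for x1 x2 y
    unfolding B_def by (simp add: Tadd cinner_add_left BL_add[OF L bdd bdd])
  have Bsc1: "B (scaleC c x) y = c * B x y" for x c y
    unfolding B_def by (simp add: Tsc cinner_scaleC_left BL_mult[OF L bdd])
  have Bb: "cmod (B x y) \<le> M * norm x * (M * norm y)" for x y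
    unfolding B_def by (rule BL_bound[OF L sb])
  have "\<exists>z. \<forall>y. Re (B x y) = inner z y" for x
  proof (rule riesz_real)
    show "bounded_linear (\<lambda>y. Re (B x y))"
    proof (rule bounded_linear_intro[where K = "M * norm x * M"])
      show "Re (B x (y1 + y2)) = Re (B x y1) + Re (B x y2)" for y1 y2 by (simp add: Badd2)
      show "Re (B x (r *\<^sub>R y)) = r *\<^sub>R Re (B x y)" for r y
        using Bsc2[of x "complex_of_real r" y] by (simp add: scaleC_of_real)
      show "norm (Re (B x y)) \<le> norm y * (M * norm x * M)" for y
        using abs_Re_le_cmod[of "B x y"] Bb[of x y] by (simp add: algebra_simps)
    qed
  qed
  then obtain A where A: "\<And>x y. Re (B x y) = inner (A x) y" by metis
  have AB: "cinner (A x) y = B x y" for x y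
  proof (rule complex_eqI)
    show "Re (cinner (A x) y) = Re (B x y)" by (simp add: A inner_cinner)
    have "Im (cinner (A x) y) = Re (cinner (A x) (scaleC \<i> y))"
      by (simp add: cinner_scaleC_right)
    also have "\<dots> = Re (B x (scaleC \<i> y))" by (simp add: A inner_cinner)
    also have "\<dots> = Im (B x y)" by (simp add: Bsc2)
    finally show "Im (cinner (A x) y) = Im (B x y)" .
  qed
  have Aadd: "A (u + v) = A u + A v" for u v
    by (rule cinner_ext) (simp add: AB Badd1 cinner_add_left)
  have Asc: "A (scaleC c u) = scaleC c (A u)" for c u
    by (rule cinner_ext) (simp add: AB Bsc1 cinner_scaleC_left)
  have Abd: "norm (A x) \<le> norm x * (M * M)" for x
  proof (cases "A x = 0")
    case True then show ?thesis using M0 by simp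
  next
    case False
    have "(norm (A x))^2 = Re (cinner (A x) (A x))" by (simp add: cinner_self)
    also have "\<dots> \<le> cmod (B x (A x))" by (simp add: AB complex_Re_le_cmod)
    also have "\<dots> \<le> M * norm x * (M * norm (A x))" by (rule Bb)
    finally have "norm (A x) * norm (A x) \<le> (norm x * (M * M)) * norm (A x)"
      by (simp add: power2_eq_square algebra_simps)
    then show ?thesis using False by simp
  qed
  have Abcl: "bounded_clinear A"
    unfolding bounded_clinear_def
  proof
    show "bounded_linear A"
    proof (rule bounded_linear_intro[where K = "M * M"])
      show "A (u + v) = A u + A v" for u v by (rule Aadd)
      show "A (r *\<^sub>R u) = r *\<^sub>R A u" for r u using Asc[of "complex_of_real r" u] by (simp add: scaleC_of_real)
      show "norm (A x) \<le> norm x * (M * M)" for x by (rule Abd)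
    qed
    show "\<forall>c x. A (scaleC c x) = scaleC c (A x)" using Asc by blast
  qed
  have Apos: "positive_op A"
    unfolding positive_op_def
  proof
    fix x
    show "Im (cinner (A x) x) = 0 \<and> 0 \<le> Re (cinner (A x) x)"
      unfolding AB B_def by (rule BL_pos[OF L bdd]) (simp add: cinner_self)
  qed
  have AL: "\<forall>x y. cinner (A x) y = L (\<lambda>n. cinner ((T^^n) x) ((T^^n) y))" using AB B_def by simp
  have eq: "asym_limit_L T L = A"
    unfolding asym_limit_L_def
  proof (rule the_equality)
    show "bounded_clinear A \<and> positive_op A \<and> (\<forall>x y. cinner (A x) y = L (\<lambda>n. cinner ((cadjoint T ^^ n) ((T ^^ n) x)) y))"
      using Abcl Apos AL cadjoint_pow2[OF T] by simp
    fix A' assume "bounded_clinear A' \<and> positive_op A' \<and> (\<forall>x y. cinner (A' x) y = L (\<lambda>n. cinner ((cadjoint T ^^ n) ((T ^^ n) x)) y))"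
    then have "\<forall>x y. cinner (A' x) y = cinner (A x) y" using AL cadjoint_pow2[OF T] by simp
    then show "A' = A" by (intro ext cinner_ext) simp
  qed
  show ?thesis unfolding eq using Abcl Apos AL by blast
qed



lemma part1:
  fixes T :: "'a::chilbert \<Rightarrow> 'a"
  assumes pb: "power_bounded T" and L: "banach_limit L" and ne: "asym_limit_L T L \<noteq> (\<lambda>_. 0)"
  shows "onorm (asym_limit_L T L) \<ge> 1"
proof -
  define A where "A = asym_limit_L T L"
  have Abcl: "bounded_clinear A" and Apos: "positive_op A"
    and AL: "\<And>x y. cinner (A x) y = L (\<lambda>n. cinner ((T^^n) x) ((T^^n) y))"
    using asym_L_props[OF pb L] unfolding A_def by blast+
  have T: "bounded_clinear T" using pb unfolding power_bounded_def by blast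
  obtain M where M0: "M \<ge> 0" and M: "\<And>n x. norm ((T ^^ n) x) \<le> M * norm x" using pb_bound[OF pb] by blast
  have sb: "cmod (cinner ((T^^n) x) ((T^^n) y)) \<le> M * norm x * (M * norm y)" for n x y
  proof -
    have "cmod (cinner ((T^^n) x) ((T^^n) y)) \<le> norm ((T^^n) x) * norm ((T^^n) y)" by (rule cinner_CS)
    also have "\<dots> \<le> M * norm x * (M * norm y)" by (rule mult_mono[OF M M]) (auto simp: M0)
    finally show ?thesis .
  qed
  have bdd: "bounded (range (\<lambda>n. cinner ((T^^n) x) ((T^^n) y)))" for x y by (rule bounded_seqI[OF sb])
  have shift: "cinner (A (T x)) (T y) = cinner (A x) y" for x y
  proof -
    have "cinner (A (T x)) (T y) = L (\<lambda>n. cinner ((T^^Suc n) x) ((T^^Suc n) y))"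
      unfolding AL by (simp add: funpow_Suc_right del: funpow.simps)
    also have "\<dots> = cinner (A x) y" unfolding AL by (rule BL_shift[OF L bdd, symmetric])
    finally show ?thesis .
  qed
  have iter: "cinner (A ((T^^k) x)) ((T^^k) x) = cinner (A x) x" for k x
    by (induction k) (simp_all add: shift)
  have Alin: "bounded_linear A" by (rule bcl_linear[OF Abcl])
  obtain x where qpos: "Re (cinner (A x) x) > 0"
  proof (rule ccontr)
    assume "\<not> thesis"
    then have "\<forall>x. Re (cinner (A x) x) \<le> 0" using that by (meson not_le)
    then have "\<And>x. cinner (A x) x = 0" using Apos unfolding positive_op_def
      by (metis complex_eqI dual_order.antisym zero_complex.sel)
    then have "\<And>x. A x = 0" by (rule polarization_zero[OF Abcl])
    then show False using ne unfolding A_def by auto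
  qed
  define q where "q = Re (cinner (A x) x)"
  have ale: "q \<le> onorm A * (norm ((T^^k) x))^2" for k
  proof -
    have "q = Re (cinner (A ((T^^k) x)) ((T^^k) x))" unfolding q_def iter ..
    also have "\<dots> \<le> cmod (cinner (A ((T^^k) x)) ((T^^k) x))" by (rule complex_Re_le_cmod)
    also have "\<dots> \<le> norm (A ((T^^k) x)) * norm ((T^^k) x)" by (rule cinner_CS)
    also have "\<dots> \<le> onorm A * norm ((T^^k) x) * norm ((T^^k) x)"
      by (rule mult_right_mono[OF onorm[OF Alin]]) simp
    finally show ?thesis by (simp add: power2_eq_square algebra_simps)
  qed
  define s where "s k = cinner ((T^^k) x) ((T^^k) x)" for k
  have sre: "s k = complex_of_real ((norm ((T^^k) x))^2)" for k unfolding s_def by (rule cinner_self)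
  have bs: "bounded (range s)" unfolding s_def by (rule bdd)
  have bc: "bounded (range (\<lambda>k. - complex_of_real q))" by (rule bounded_seqI[of _ "\<bar>q\<bar>"]) simp
  have bs2: "bounded (range (\<lambda>k. complex_of_real (onorm A) * s k))"
  proof (rule bounded_seqI)
    fix k show "cmod (complex_of_real (onorm A) * s k) \<le> \<bar>onorm A\<bar> * (M * norm x * (M * norm x))"
      unfolding norm_mult using sb[of k x x] by (simp add: s_def mult_left_mono)
  qed
  define c where "c k = complex_of_real (onorm A) * s k + - complex_of_real q" for k
  have bcc: "bounded (range c)"
    using bounded_plus_comp[OF bs2 bc] unfolding c_def by simp
  have "Im (L c) = 0 \<and> Re (L c) \<ge> 0"
  proof (rule BL_pos[OF L bcc])
    fix k show "Im (c k) = 0 \<and> 0 \<le> Re (c k)" using ale[of k] unfolding c_def sre by simp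
  qed
  moreover have "L c = complex_of_real (onorm A) * cinner (A x) x - complex_of_real q"
  proof -
    have "L c = L (\<lambda>k. complex_of_real (onorm A) * s k) + L (\<lambda>k. - complex_of_real q)"
      unfolding c_def by (rule BL_add[OF L bs2 bc])
    also have "\<dots> = complex_of_real (onorm A) * L s - complex_of_real q"
      by (simp add: BL_mult[OF L bs] BL_const[OF L])
    also have "L s = cinner (A x) x" unfolding s_def AL ..
    finally show ?thesis .
  qed
  ultimately have "onorm A * q - q \<ge> 0" unfolding q_def by simp
  then have "(onorm A - 1) * q \<ge> 0" by (simp add: algebra_simps)
  then have "onorm A - 1 \<ge> 0" using qpos unfolding q_def[symmetric] by (simp add: zero_le_mult_iff)
  then show ?thesis unfolding A_def by simp
qed



lemma cinner_tendsto_left: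
  fixes X :: "nat \<Rightarrow> 'a::complex_inner"
  assumes "X \<longlonglongrightarrow> a"
  shows "(\<lambda>n. cinner (X n) y) \<longlonglongrightarrow> cinner a y"
proof -
  have "bounded_linear (\<lambda>u. cinner u y)"
  proof (rule bounded_linear_intro[where K = "norm y"])
    show "cinner (u + v) y = cinner u y + cinner v y" for u v by (rule cinner_add_left)
    show "cinner (r *\<^sub>R u) y = r *\<^sub>R cinner u y" for r u
      by (metis cinner_scaleC_left scaleC_of_real scaleR_conv_of_real)
    show "norm (cinner u y) \<le> norm u * norm y" for u by (simp add: cinner_CS)
  qed
  then show ?thesis by (rule bounded_linear.tendsto[OF _ assms])
qed

lemma cinner_expand:
  fixes U :: "'a::complex_inner \<Rightarrow> 'a"
  assumes "bounded_clinear U"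
  shows "cinner (U (x - a)) (U (x - a)) = cinner (U x) (U x) - cinner (U x) (U a) - cinner (U a) (U x) + cinner (U a) (U a)"
proof -
  have e: "U (x - a) = U x - U a" using bcl_linear[OF assms] by (simp add: linear_simps)
  show ?thesis unfolding e cinner_diff_left cinner_diff_right by (simp add: algebra_simps)
qed

lemma part2:
  fixes T :: "'a::chilbert \<Rightarrow> 'a"
  assumes ct: "contraction T" and ne: "asym_limit T \<noteq> (\<lambda>_. 0)"
  shows "onorm (asym_limit T) = 1"
proof -
  have T: "bounded_clinear T" and T1: "onorm T \<le> 1" using ct unfolding contraction_def by blast+
  have nT: "norm (T u) \<le> norm u" for u
    using onorm[OF bcl_linear[OF T], of u] T1 mult_right_mono[OF T1 norm_ge_zero[of u]] by linarith
  have nTn: "norm ((T^^n) u) \<le> norm u" for n u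
  proof (induction n)
    case 0 show ?case by simp
  next
    case (Suc n)
    have "norm ((T^^Suc n) u) = norm (T ((T^^n) u))" by simp
    also have "\<dots> \<le> norm ((T^^n) u)" by (rule nT)
    also have "\<dots> \<le> norm u" by (rule Suc)
    finally show ?case .
  qed
  have dec: "norm ((T^^n) u) \<le> norm ((T^^m) u)" if "m \<le> n" for m n u
  proof -
    define k where "k = n - m"
    have "n = k + m" using that by (simp add: k_def)
    then have "(T^^n) u = (T^^k) ((T^^m) u)" by (simp add: funpow_add)
    then show ?thesis using nTn by simp
  qed
  define S where "S = cadjoint T"
  define P where "P n x = (S^^n) ((T^^n) x)" for n x
  have Pc: "cinner (P n x) y = cinner ((T^^n) x) ((T^^n) y)" for n x y
    unfolding P_def S_def by (rule cadjoint_pow2[OF T])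
  have Pn: "norm (P n x) \<le> norm x" for n x
  proof (cases "P n x = 0")
    case True then show ?thesis by simp
  next
    case False
    have "(norm (P n x))^2 = Re (cinner (P n x) (P n x))" by (simp add: cinner_self)
    also have "\<dots> \<le> cmod (cinner ((T^^n) x) ((T^^n) (P n x)))" by (simp add: Pc complex_Re_le_cmod)
    also have "\<dots> \<le> norm ((T^^n) x) * norm ((T^^n) (P n x))" by (rule cinner_CS)
    also have "\<dots> \<le> norm x * norm (P n x)" by (rule mult_mono[OF nTn nTn]) auto
    finally have "norm (P n x) * norm (P n x) \<le> norm x * norm (P n x)" by (simp add: power2_eq_square)
    then show ?thesis using False by simp
  qed
  have key: "(norm (P m x - P n x))^2 \<le> 2 * ((norm ((T^^m) x))^2 - (norm ((T^^n) x))^2)"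
    if mn: "m \<le> n" for m n x
  proof -
    define h where "h u v = cinner ((T^^m) u) ((T^^m) v) - cinner ((T^^n) u) ((T^^n) v)" for u v
    define d where "d = P m x - P n x"
    define a where "a = scaleC (1/2) d"
    have hd: "h x v = cinner d v" for v unfolding h_def d_def by (simp add: cinner_diff_left Pc)
    have hexp: "h (x - a) (x - a) = h x x - h x a - h a x + h a a"
      unfolding h_def using cinner_expand[OF bcl_pow[OF T], of m x a] cinner_expand[OF bcl_pow[OF T], of n x a]
      by (simp add: algebra_simps)
    have hpos: "Re (h u u) \<ge> 0" for u
      unfolding h_def using dec[OF mn, of u] by (simp add: cinner_self power_mono)
    have hxa: "h x a = complex_of_real ((norm d)^2 / 2)"
      unfolding hd a_def by (simp add: cinner_scaleC_right cinner_self)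
    have hax: "h a x = cnj (h x a)" unfolding h_def by (metis cinner_commute complex_cnj_diff)
    have na: "norm a = norm d / 2" unfolding a_def by (simp add: norm_scaleC)
    have haa: "Re (h a a) \<le> (norm d)^2 / 2"
    proof -
      have "Re (h a a) = Re (cinner (P m a - P n a) a)" unfolding h_def by (simp add: cinner_diff_left Pc)
      also have "\<dots> \<le> cmod (cinner (P m a - P n a) a)" by (rule complex_Re_le_cmod)
      also have "\<dots> \<le> norm (P m a - P n a) * norm a" by (rule cinner_CS)
      also have "\<dots> \<le> (2 * norm a) * norm a"
      proof (rule mult_right_mono)
        show "norm (P m a - P n a) \<le> 2 * norm a"
          using norm_triangle_ineq4[of "P m a" "P n a"] Pn[of m a] Pn[of n a] by linarith
      qed simp
      also have "\<dots> = (norm d)^2 / 2" unfolding na by (simp add: power2_eq_square)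
      finally show ?thesis .
    qed
    have "0 \<le> Re (h (x - a) (x - a))" by (rule hpos)
    also have "\<dots> = Re (h x x) - (norm d)^2 + Re (h a a)"
      unfolding hexp hax hxa by simp
    finally have "(norm d)^2 \<le> 2 * Re (h x x)" using haa by linarith
    moreover have "Re (h x x) = (norm ((T^^m) x))^2 - (norm ((T^^n) x))^2"
      unfolding h_def by (simp add: cinner_self)
    ultimately show ?thesis unfolding d_def by simp
  qed
  have conv: "\<exists>l. (\<lambda>n. P n x) \<longlonglongrightarrow> l" for x
  proof -
    define r where "r n = (norm ((T^^n) x))^2" for n
    have "decseq r" unfolding r_def decseq_def by (auto intro: power_mono dec)
    then obtain l where "r \<longlonglongrightarrow> l" using decseq_convergent[of r 0] unfolding r_def by auto
    then have cr: "Cauchy r" using convergent_Cauchy convergent_def by blast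
    have "Cauchy (\<lambda>n. P n x)"
    proof (rule metric_CauchyI)
      fix e :: real assume e: "e > 0"
      obtain N where N: "\<And>m n. m \<ge> N \<Longrightarrow> n \<ge> N \<Longrightarrow> norm (r m - r n) < e^2 / 2"
        using CauchyD[OF cr, of "e^2/2"] e by auto
      have "dist (P m x) (P n x) < e" if "m \<ge> N" "n \<ge> N" for m n
      proof -
        have "(dist (P m x) (P n x))^2 < e^2"
        proof (cases "m \<le> n")
          case True
          have a: "(dist (P m x) (P n x))^2 \<le> 2 * (r m - r n)"
            using key[OF True, of x] unfolding r_def dist_norm by simp
          have b0: "2 * \<bar>r m - r n\<bar> < e^2" using N[OF that] by (simp add: field_simps)
          have b1: "2 * (r m - r n) \<le> 2 * \<bar>r m - r n\<bar>" by (intro mult_left_mono abs_ge_self) simp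
          have b: "2 * (r m - r n) < e^2" using b1 b0 by (rule le_less_trans)
          show ?thesis using a b by (rule le_less_trans)
        next
          case False
          then have mn: "n \<le> m" by simp
          have a: "(dist (P m x) (P n x))^2 \<le> 2 * (r n - r m)"
            using key[OF mn, of x] unfolding r_def dist_norm by (simp add: norm_minus_commute)
          have b0: "2 * \<bar>r n - r m\<bar> < e^2" using N[OF that(2,1)] by (simp add: field_simps)
          have b1: "2 * (r n - r m) \<le> 2 * \<bar>r n - r m\<bar>" by (intro mult_left_mono abs_ge_self) simp
          have b: "2 * (r n - r m) < e^2" using b1 b0 by (rule le_less_trans)
          show ?thesis using a b by (rule le_less_trans)
        qed
        then show ?thesis using e by (meson power_less_imp_less_base less_imp_le)
      qed
      then show "\<exists>M. \<forall>m\<ge>M. \<forall>n\<ge>M. dist (P m x) (P n x) < e" by blast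
    qed
    then show ?thesis using Cauchy_convergent_iff convergent_def by blast
  qed
  then obtain A where AP: "\<And>x. (\<lambda>n. P n x) \<longlonglongrightarrow> A x" by metis
  have eqA: "asym_limit T = A"
    unfolding asym_limit_def
  proof (rule the_equality)
    show "\<forall>x. (\<lambda>n. (cadjoint T ^^ n) ((T ^^ n) x)) \<longlonglongrightarrow> A x" using AP unfolding P_def S_def by blast
    fix A' assume "\<forall>x. (\<lambda>n. (cadjoint T ^^ n) ((T ^^ n) x)) \<longlonglongrightarrow> A' x"
    then have h: "\<And>x. (\<lambda>n. (cadjoint T ^^ n) ((T ^^ n) x)) \<longlonglongrightarrow> A' x" by blast
    have h2: "\<And>x. (\<lambda>n. (cadjoint T ^^ n) ((T ^^ n) x)) \<longlonglongrightarrow> A x" using AP unfolding P_def S_def by blast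
    show "A' = A" by (rule ext) (rule LIMSEQ_unique[OF h h2])
  qed
  have Ac: "(\<lambda>n. cinner ((T^^n) x) ((T^^n) y)) \<longlonglongrightarrow> cinner (A x) y" for x y
    using cinner_tendsto_left[OF AP[of x], of y] by (simp add: Pc)
  have lin: "bounded_linear (T^^n)" for n by (rule bcl_linear[OF bcl_pow[OF T]])
  have Tadd: "(T^^n) (u + v) = (T^^n) u + (T^^n) v" for n u v using lin[of n] by (simp add: linear_simps)
  have Tsc: "(T^^n) (scaleC c u) = scaleC c ((T^^n) u)" for n c u by (rule bcl_scaleC[OF bcl_pow[OF T]])
  have Aadd: "A (u + v) = A u + A v" for u v
  proof (rule cinner_ext)
    fix y
    have "(\<lambda>n. cinner ((T^^n) (u+v)) ((T^^n) y)) \<longlonglongrightarrow> cinner (A u) y + cinner (A v) y"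
      unfolding Tadd cinner_add_left by (intro tendsto_add Ac)
    then show "cinner (A (u + v)) y = cinner (A u + A v) y"
      using Ac[of "u+v" y] LIMSEQ_unique cinner_add_left by metis
  qed
  have Asc: "A (scaleC c u) = scaleC c (A u)" for c u
  proof (rule cinner_ext)
    fix y
    have "(\<lambda>n. cinner ((T^^n) (scaleC c u)) ((T^^n) y)) \<longlonglongrightarrow> c * cinner (A u) y"
      unfolding Tsc cinner_scaleC_left by (intro tendsto_mult_left Ac)
    then show "cinner (A (scaleC c u)) y = cinner (scaleC c (A u)) y"
      using Ac[of "scaleC c u" y] LIMSEQ_unique cinner_scaleC_left by metis
  qed
  have Abd: "norm (A x) \<le> norm x" for x
    by (rule LIMSEQ_le_const2[OF tendsto_norm[OF AP[of x]]]) (use Pn in auto)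
  have Alin: "bounded_linear A"
  proof (rule bounded_linear_intro[where K = 1])
    show "A (u + v) = A u + A v" for u v by (rule Aadd)
    show "A (r *\<^sub>R u) = r *\<^sub>R A u" for r u using Asc[of "complex_of_real r" u] by (simp add: scaleC_of_real)
    show "norm (A x) \<le> norm x * 1" for x using Abd by simp
  qed
  have Abcl: "bounded_clinear A" unfolding bounded_clinear_def using Alin Asc by blast
  have ole: "onorm A \<le> 1" by (rule onorm_bound) (use Abd in auto)
  have shift: "cinner (A (T x)) (T y) = cinner (A x) y" for x y
  proof -
    have "(\<lambda>n. cinner ((T^^Suc n) x) ((T^^Suc n) y)) \<longlonglongrightarrow> cinner (A x) y"
      by (rule LIMSEQ_Suc[OF Ac])
    moreover have "(\<lambda>n. cinner ((T^^Suc n) x) ((T^^Suc n) y)) \<longlonglongrightarrow> cinner (A (T x)) (T y)"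
      using Ac[of "T x" "T y"] by (simp add: funpow_Suc_right del: funpow.simps)
    ultimately show ?thesis using LIMSEQ_unique by blast
  qed
  have iter: "cinner (A ((T^^k) x)) ((T^^k) x) = cinner (A x) x" for k x
    by (induction k) (simp_all add: shift)
  have rq: "(\<lambda>n. (norm ((T^^n) x))^2) \<longlonglongrightarrow> Re (cinner (A x) x)" for x
    using tendsto_Re[OF Ac[of x x]] by (simp add: cinner_self)
  have Im0: "Im (cinner (A x) x) = 0" for x
    using tendsto_Im[OF Ac[of x x]] by (simp add: cinner_self LIMSEQ_const_iff)
  obtain x where qpos: "Re (cinner (A x) x) > 0"
  proof (rule ccontr)
    assume "\<not> thesis"
    then have "\<forall>x. Re (cinner (A x) x) \<le> 0" using that by (meson not_le)
    moreover have "\<forall>x. Re (cinner (A x) x) \<ge> 0"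
      by (intro allI LIMSEQ_le_const[OF rq]) simp
    ultimately have "\<And>x. cinner (A x) x = 0" using Im0
      by (metis complex_eqI dual_order.antisym zero_complex.sel)
    then have "\<And>x. A x = 0" by (rule polarization_zero[OF Abcl])
    then show False using ne unfolding eqA by auto
  qed
  define q where "q = Re (cinner (A x) x)"
  have ale: "q \<le> onorm A * (norm ((T^^k) x))^2" for k
  proof -
    have "q = Re (cinner (A ((T^^k) x)) ((T^^k) x))" unfolding q_def iter ..
    also have "\<dots> \<le> cmod (cinner (A ((T^^k) x)) ((T^^k) x))" by (rule complex_Re_le_cmod)
    also have "\<dots> \<le> norm (A ((T^^k) x)) * norm ((T^^k) x)" by (rule cinner_CS)
    also have "\<dots> \<le> onorm A * norm ((T^^k) x) * norm ((T^^k) x)"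
      by (rule mult_right_mono[OF onorm[OF Alin]]) simp
    finally show ?thesis by (simp add: power2_eq_square algebra_simps)
  qed
  have rqx: "(\<lambda>k. onorm A * (norm ((T^^k) x))^2) \<longlonglongrightarrow> onorm A * q"
    unfolding q_def by (rule tendsto_mult_left[OF rq])
  have "q \<le> onorm A * q"
    by (rule LIMSEQ_le_const[OF rqx]) (use ale in auto)
  then have "(onorm A - 1) * q \<ge> 0" by (simp add: algebra_simps)
  then have "onorm A \<ge> 1" using qpos unfolding q_def[symmetric] by (simp add: zero_le_mult_iff)
  then show ?thesis unfolding eqA using ole by simp
qed


theorem mainTheorem1:
  fixes T :: "'a::chilbert \<Rightarrow> 'a"
    and L :: "(nat \<Rightarrow> complex) \<Rightarrow> complex"
  shows "(power_bounded T \<and> banach_limit L \<and> asym_limit_L T L \<noteq> (\<lambda>_. 0)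
            \<longrightarrow> onorm (asym_limit_L T L) \<ge> 1)
       \<and> (contraction T \<and> asym_limit T \<noteq> (\<lambda>_. 0) \<longrightarrow> onorm (asym_limit T) = 1)"
  using part1 part2 by blast

end
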